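(* Assume $A$ contains at least one prime element and that $U(A)$ is finite. Then for every $x\in A\setminus(U(A)\cup\{0\})$ such that $\mathcal D(x)$ is finite, there exist a prime element $p$ of $A$, an integer $n\ge1$ and $a\in A\setminus\{0\}$ such that $x=ap^n$ and $\gcd(a,p)=1$ (i.e. $p\nmid a$).
   Context: Let $\mathbb F$ be a subfield of $\mathbb C$ with a norm (absolute value) $\|\cdot\|_{\mathbb F}$, and $A$ a subring of $\mathbb F$ containing $1$ (hence an integral domain). $U(A)$ is the unit group of $A$; $d\mid x$ means $x=dc$ for some $c\in A$; $\mathcal D(x)=\{d\in A:d\mid x\}$; $xU(A)=\{xu:u\in U(A)\}$. $N:A\to\mathbb F\cap\mathbb R$ is a map with $N(a)\neq0$ for all nonzero $a\in A$ and satisfying: for all $x\in A$, $N(x)\in A$, $\mathcal D(N(x))=\mathcal D(x)$ and $N(N(x))=N(x)$; for all $x,y\in A$ there is $z\in A$ with $N(x)+N(y)=N(z)$; $N(-x)=N(x)$; $N(xy)=N(x)N(y)$; $\|N(x)\|_{\mathbb F}=N(x)$; for every $x\ne0$ there is $x'\in\mathbb F\cap\mathbb R$ with $N(x)^2=xx'\in A$. An element $p\in A$ is irreducible if $p\notin U(A)\cup\{0\}$ and $\mathcal D(p)=U(A)\cup pU(A)$; it is prime if it is irreducible and $N(p)=p$. For a prime $p$ and $a\in A$, $\gcd(a,p)=1$ means $p\nmid a$. *)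

theory Defs
  imports Complex_Main
begin

definition subfield_of_C :: "complex set \<Rightarrow> bool" where
  "subfield_of_C F \<longleftrightarrow> 0 \<in> F \<and> 1 \<in> F \<and>
     (\<forall>x\<in>F. \<forall>y\<in>F. x + y \<in> F \<and> x * y \<in> F) \<and>
     (\<forall>x\<in>F. - x \<in> F) \<and> (\<forall>x\<in>F. x \<noteq> 0 \<longrightarrow> inverse x \<in> F)"

definition abs_value_on :: "complex set \<Rightarrow> (complex \<Rightarrow> real) \<Rightarrow> bool" where
  "abs_value_on F nrm \<longleftrightarrow>
     (\<forall>x\<in>F. nrm x \<ge> 0 \<and> (nrm x = 0 \<longleftrightarrow> x = 0)) \<and>
     (\<forall>x\<in>F. \<forall>y\<in>F. nrm (x * y) = nrm x * nrm y \<and> nrm (x + y) \<le> nrm x + nrm y)"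

definition subring_of :: "complex set \<Rightarrow> complex set \<Rightarrow> bool" where
  "subring_of A F \<longleftrightarrow> A \<subseteq> F \<and> 0 \<in> A \<and> 1 \<in> A \<and>
     (\<forall>x\<in>A. \<forall>y\<in>A. x + y \<in> A \<and> x * y \<in> A) \<and> (\<forall>x\<in>A. - x \<in> A)"

definition units_of_ring :: "complex set \<Rightarrow> complex set" where
  "units_of_ring A = {u \<in> A. \<exists>v\<in>A. u * v = 1}"

definition rdvd :: "complex set \<Rightarrow> complex \<Rightarrow> complex \<Rightarrow> bool" where
  "rdvd A d x \<longleftrightarrow> (\<exists>c\<in>A. x = d * c)"

definition divisors :: "complex set \<Rightarrow> complex \<Rightarrow> complex set" where
  "divisors A x = {d \<in> A. rdvd A d x}"

definition good_N :: "complex set \<Rightarrow> complex set \<Rightarrow> (complex \<Rightarrow> real) \<Rightarrow> (complex \<Rightarrow> complex) \<Rightarrow> bool" where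
  "good_N F A nrm N \<longleftrightarrow>
     (\<forall>x\<in>A. N x \<in> F \<and> N x \<in> \<real>) \<and>
     (\<forall>a\<in>A. a \<noteq> 0 \<longrightarrow> N a \<noteq> 0) \<and>
     (\<forall>x\<in>A. N x \<in> A \<and> divisors A (N x) = divisors A x \<and> N (N x) = N x) \<and>
     (\<forall>x\<in>A. \<forall>y\<in>A. \<exists>z\<in>A. N x + N y = N z) \<and>
     (\<forall>x\<in>A. N (- x) = N x) \<and>
     (\<forall>x\<in>A. \<forall>y\<in>A. N (x * y) = N x * N y) \<and>
     (\<forall>x\<in>A. complex_of_real (nrm (N x)) = N x) \<and>
     (\<forall>x\<in>A. x \<noteq> 0 \<longrightarrow> (\<exists>x'. x' \<in> F \<and> x' \<in> \<real> \<and> (N x)\<^sup>2 = x * x' \<and> x * x' \<in> A))"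

definition irreducible_el :: "complex set \<Rightarrow> complex \<Rightarrow> bool" where
  "irreducible_el A p \<longleftrightarrow> p \<in> A \<and> p \<notin> units_of_ring A \<and> p \<noteq> 0 \<and>
     divisors A p = units_of_ring A \<union> {p * u | u. u \<in> units_of_ring A}"

definition prime_el :: "complex set \<Rightarrow> (complex \<Rightarrow> complex) \<Rightarrow> complex \<Rightarrow> bool" where
  "prime_el A N p \<longleftrightarrow> irreducible_el A p \<and> N p = p"

end

theory Submission
  imports Defs
begin

lemma sr_facts:
  assumes "subring_of A F"
  shows "1 \<in> A" "0 \<in> A" "\<And>x y. x \<in> A \<Longrightarrow> y \<in> A \<Longrightarrow> x * y \<in> A"
  using assms unfolding subring_of_def by auto

lemma dvd_trans_A:
  assumes "subring_of A F" "rdvd A a b" "rdvd A b c"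
  shows "rdvd A a c"
  using assms sr_facts[OF assms(1)] unfolding rdvd_def
  by (metis mult.assoc)

lemma pow_in_A:
  assumes "subring_of A F" "p \<in> A"
  shows "p ^ n \<in> A"
  using sr_facts[OF assms(1)] assms(2) by (induction n) auto

lemma irr_exists:
  assumes sr: "subring_of A F" and x: "x \<in> A" "x \<notin> units_of_ring A" "x \<noteq> 0"
    and fin: "finite (divisors A x)"
  shows "\<exists>q. irreducible_el A q \<and> rdvd A q x"
proof -
  note S = sr_facts[OF sr]
  define P where "P d \<longleftrightarrow> d \<in> divisors A x \<and> d \<notin> units_of_ring A" for d
  have Px: "P x" unfolding P_def divisors_def rdvd_def using x S(1) by force
  obtain q where q: "P q" and qmin: "\<And>y. P y \<Longrightarrow> card (divisors A q) \<le> card (divisors A y)"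
    using ex_has_least_nat[of P x "\<lambda>d. card (divisors A d)"] Px by blast
  have qA: "q \<in> A" and qx: "rdvd A q x" and qU: "q \<notin> units_of_ring A"
    using q unfolding P_def divisors_def by auto
  have q0: "q \<noteq> 0" using qx x(3) unfolding rdvd_def by auto
  have "divisors A q = units_of_ring A \<union> {q * u | u. u \<in> units_of_ring A}"
  proof
    show "units_of_ring A \<union> {q * u | u. u \<in> units_of_ring A} \<subseteq> divisors A q"
    proof
      fix e assume "e \<in> units_of_ring A \<union> {q * u | u. u \<in> units_of_ring A}"
      then show "e \<in> divisors A q"
      proof
        assume "e \<in> units_of_ring A"
        then obtain v where "e \<in> A" "v \<in> A" "e * v = 1" unfolding units_of_ring_def by auto
        have "q = e * (v * q)" using \<open>e * v = 1\<close> by (simp add: mult.assoc[symmetric])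
        moreover have "v * q \<in> A" using S(3) \<open>v \<in> A\<close> qA by blast
        ultimately show ?thesis unfolding divisors_def rdvd_def using \<open>e \<in> A\<close> by blast
      next
        assume "e \<in> {q * u | u. u \<in> units_of_ring A}"
        then obtain u v where "e = q * u" "u \<in> A" "v \<in> A" "u * v = 1" unfolding units_of_ring_def by auto
        have "q = e * v" using \<open>e = q * u\<close> \<open>u * v = 1\<close> by (simp add: mult.assoc)
        moreover have "e \<in> A" using S(3) \<open>u \<in> A\<close> qA \<open>e = q * u\<close> by blast
        ultimately show ?thesis unfolding divisors_def rdvd_def using \<open>v \<in> A\<close> by blast
      qed
    qed
  next
    show "divisors A q \<subseteq> units_of_ring A \<union> {q * u | u. u \<in> units_of_ring A}"
    proof
      fix e assume e: "e \<in> divisors A q"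
      show "e \<in> units_of_ring A \<union> {q * u | u. u \<in> units_of_ring A}"
      proof (cases "e \<in> units_of_ring A")
        case True then show ?thesis by auto
      next
        case False
        have eA: "e \<in> A" and eq: "rdvd A e q" using e unfolding divisors_def by auto
        have ex: "rdvd A e x" using dvd_trans_A[OF sr eq qx] .
        have Pe: "P e" unfolding P_def divisors_def using eA ex False by auto
        have sub: "divisors A e \<subseteq> divisors A q"
          unfolding divisors_def using dvd_trans_A[OF sr _ eq] by auto
        have subx: "divisors A q \<subseteq> divisors A x"
          unfolding divisors_def using dvd_trans_A[OF sr _ qx] by auto
        have finq: "finite (divisors A q)" using finite_subset[OF subx fin] .
        have "card (divisors A q) \<le> card (divisors A e)" using qmin[OF Pe] .
        hence deq: "divisors A e = divisors A q" using card_subset_eq[OF finq sub] card_mono[OF finq sub] by linarith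
        have "q = q * 1" by simp
        hence "rdvd A q q" unfolding rdvd_def using S(1) by blast
        hence "q \<in> divisors A q" unfolding divisors_def using qA by blast
        hence "q \<in> divisors A e" using deq by simp
        hence "rdvd A q e" unfolding divisors_def by blast
        then obtain c c' where c: "c \<in> A" "q = e * c" and c': "c' \<in> A" "e = q * c'"
          using eq unfolding rdvd_def by blast
        hence "q * (c' * c) = q * 1" by (metis mult.assoc mult_1_right)
        hence "c' * c = 1" using q0 by simp
        hence "c' \<in> units_of_ring A" unfolding units_of_ring_def using c(1) c'(1) by auto
        then show ?thesis using c'(2) by auto
      qed
    qed
  qed
  then show ?thesis using qA qU q0 qx unfolding irreducible_el_def by auto
qed

lemma prime_exists:
  assumes sr: "subring_of A F" and gN: "good_N F A nrm N" and x: "x \<in> A" "x \<notin> units_of_ring A" "x \<noteq> 0"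
    and fin: "finite (divisors A x)"
  shows "\<exists>p. prime_el A N p \<and> rdvd A p x"
proof -
  note S = sr_facts[OF sr]
  obtain q where irr: "irreducible_el A q" and qx: "rdvd A q x" using irr_exists[OF sr x fin] by blast
  have qA: "q \<in> A" and qU: "q \<notin> units_of_ring A" and q0: "q \<noteq> 0"
    and dq: "divisors A q = units_of_ring A \<union> {q * u | u. u \<in> units_of_ring A}"
    using irr unfolding irreducible_el_def by auto
  have NA: "N q \<in> A" and dN: "divisors A (N q) = divisors A q" and NN: "N (N q) = N q"
    using gN qA unfolding good_N_def by auto
  have N0: "N q \<noteq> 0" using gN qA q0 unfolding good_N_def by auto
  have "N q = N q * 1" by simp
  hence "N q \<in> divisors A (N q)" unfolding divisors_def rdvd_def using NA S(1) by blast
  hence Nin: "N q \<in> units_of_ring A \<union> {q * u | u. u \<in> units_of_ring A}" using dN dq by simp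
  have NU: "N q \<notin> units_of_ring A"
  proof
    assume "N q \<in> units_of_ring A"
    then obtain v where v: "v \<in> A" "N q * v = 1" unfolding units_of_ring_def by auto
    have "q = q * 1" by simp
    hence "q \<in> divisors A q" unfolding divisors_def rdvd_def using qA S(1) by blast
    hence "q \<in> divisors A (N q)" using dN by simp
    then obtain c where c: "c \<in> A" "N q = q * c" unfolding divisors_def rdvd_def by auto
    have "q * (c * v) = 1" using v c by (simp add: mult.assoc)
    moreover have "c * v \<in> A" using S(3) c(1) v(1) by blast
    ultimately show False using qU qA unfolding units_of_ring_def by auto
  qed
  then obtain u v where u: "N q = q * u" "u \<in> A" "v \<in> A" "u * v = 1"
    using Nin unfolding units_of_ring_def by auto
  have "{q * w | w. w \<in> units_of_ring A} = {N q * w | w. w \<in> units_of_ring A}"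
  proof (intro set_eqI iffI)
    fix y assume "y \<in> {q * w | w. w \<in> units_of_ring A}"
    then obtain w w' where w: "y = q * w" "w \<in> A" "w' \<in> A" "w * w' = 1" unfolding units_of_ring_def by auto
    have "N q * (v * w) = q * (u * v) * w" using u by (simp add: mult.assoc)
    hence yeq: "y = N q * (v * w)" using w u by simp
    have "(v * w) * (u * w') = (u * v) * (w * w')" by (simp add: ac_simps)
    also have "... = 1" using u(4) w(4) by simp
    finally have inv: "(v * w) * (u * w') = 1" .
    have "v * w \<in> A" "u * w' \<in> A" using S(3) u w by blast+
    hence "v * w \<in> units_of_ring A" unfolding units_of_ring_def using inv by blast
    then show "y \<in> {N q * w | w. w \<in> units_of_ring A}" using yeq by blast
  next
    fix y assume "y \<in> {N q * w | w. w \<in> units_of_ring A}"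
    then obtain w w' where w: "y = N q * w" "w \<in> A" "w' \<in> A" "w * w' = 1" unfolding units_of_ring_def by auto
    have yeq: "y = q * (u * w)" using w u by (simp add: mult.assoc)
    have "(u * w) * (v * w') = (u * v) * (w * w')" by (simp add: ac_simps)
    also have "... = 1" using u(4) w(4) by simp
    finally have inv: "(u * w) * (v * w') = 1" .
    have "u * w \<in> A" "v * w' \<in> A" using S(3) u w by blast+
    hence "u * w \<in> units_of_ring A" unfolding units_of_ring_def using inv by blast
    then show "y \<in> {q * w | w. w \<in> units_of_ring A}" using yeq by blast
  qed
  hence "irreducible_el A (N q)" using NA NU N0 dN dq unfolding irreducible_el_def by simp
  hence "prime_el A N (N q)" using NN unfolding prime_el_def by simp
  moreover have "rdvd A (N q) x"
  proof -
    obtain c where "c \<in> A" "x = q * c" using qx unfolding rdvd_def by auto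
    moreover have "N q * (v * c) = q * (u * v) * c" using u by (simp add: mult.assoc)
    ultimately have "x = N q * (v * c)" using u by simp
    moreover have "v * c \<in> A" using S(3) u(3) \<open>c \<in> A\<close> by blast
    ultimately show ?thesis unfolding rdvd_def by blast
  qed
  ultimately show ?thesis by blast
qed

lemma pow_lt_neq:
  assumes sr: "subring_of A F" and p: "p \<in> A" "p \<notin> units_of_ring A" "p \<noteq> 0" and nm: "n < m"
  shows "p ^ n \<noteq> p ^ m"
proof
  assume eq: "p ^ n = p ^ m"
  obtain k where k0: "m = Suc (n + k)" using less_imp_Suc_add[OF nm] by blast
  have k: "m = n + Suc k" using k0 by simp
  have F: "p ^ m = p ^ n * p ^ Suc k" unfolding k by (rule power_add)
  have "p ^ n * p ^ Suc k = p ^ m" using F by (rule sym)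
  also have "\<dots> = p ^ n" using eq by (rule sym)
  also have "\<dots> = p ^ n * 1" by (rule mult_1_right[symmetric])
  finally have E: "p ^ n * p ^ Suc k = p ^ n * 1" .
  have pn0: "p ^ n \<noteq> 0" using p(3) by simp
  have "p ^ Suc k = 1" using mult_left_cancel[OF pn0] E by blast
  hence "p * p ^ k = 1" by (simp only: power_Suc)
  moreover have "p ^ k \<in> A" using pow_in_A[OF sr p(1)] .
  ultimately have "p \<in> units_of_ring A" unfolding units_of_ring_def using p(1) by blast
  thus False using p(2) by simp
qed

lemma pow_inj:
  assumes sr: "subring_of A F" and p: "p \<in> A" "p \<notin> units_of_ring A" "p \<noteq> 0"
  shows "inj (\<lambda>n::nat. p ^ n)"
proof (rule injI)
  fix n m :: nat assume "p ^ n = p ^ m"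
  thus "n = m" using pow_lt_neq[OF sr p, of n m] pow_lt_neq[OF sr p, of m n]
    by (cases n m rule: linorder_cases) auto
qed

theorem corollary5p4:
  fixes F A :: "complex set" and nrm :: "complex \<Rightarrow> real" and N :: "complex \<Rightarrow> complex"
  assumes "subfield_of_C F" and "abs_value_on F nrm" and "subring_of A F"
    and "good_N F A nrm N"
    and "\<exists>p. prime_el A N p"
    and "finite (units_of_ring A)"
  shows "\<forall>x\<in>A. x \<notin> units_of_ring A \<and> x \<noteq> 0 \<and> finite (divisors A x) \<longrightarrow>
           (\<exists>p n a. prime_el A N p \<and> n \<ge> (1::nat) \<and> a \<in> A \<and> a \<noteq> 0 \<and>
                    x = a * p ^ n \<and> \<not> rdvd A p a)"
proof (intro ballI impI)
  fix x assume xA: "x \<in> A" and xc: "x \<notin> units_of_ring A \<and> x \<noteq> 0 \<and> finite (divisors A x)"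
  have sr: "subring_of A F" by fact
  note S = sr_facts[OF sr]
  have x: "x \<notin> units_of_ring A" "x \<noteq> 0" "finite (divisors A x)" using xc by auto
  obtain p where pp: "prime_el A N p" and px: "rdvd A p x"
    using prime_exists[OF sr assms(4) xA x(1) x(2) x(3)] by blast
  have p: "p \<in> A" "p \<notin> units_of_ring A" "p \<noteq> 0"
    using pp unfolding prime_el_def irreducible_el_def by auto
  have exn: "\<exists>n. \<not> rdvd A (p ^ n) x"
  proof (rule ccontr)
    assume "\<not> (\<exists>n. \<not> rdvd A (p ^ n) x)"
    hence "range (\<lambda>n::nat. p ^ n) \<subseteq> divisors A x"
      unfolding divisors_def using pow_in_A[OF sr p(1)] by auto
    hence "finite (range (\<lambda>n::nat. p ^ n))" using x(3) finite_subset by blast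
    hence "finite (UNIV :: nat set)" using finite_imageD pow_inj[OF sr p] by blast
    thus False by simp
  qed
  define m where "m = (LEAST n. \<not> rdvd A (p ^ n) x)"
  have m1: "\<not> rdvd A (p ^ m) x" unfolding m_def using exn by (metis LeastI)
  have m2: "\<And>k. k < m \<Longrightarrow> rdvd A (p ^ k) x" unfolding m_def using not_less_Least by blast
  have "m \<noteq> 0"
  proof
    assume "m = 0"
    hence "\<not> rdvd A 1 x" using m1 by simp
    moreover have "x = 1 * x" by simp
    ultimately show False unfolding rdvd_def using xA by blast
  qed
  have "m \<noteq> 1" using m1 px by auto
  then obtain n where n: "m = Suc n" "n \<ge> 1" using \<open>m \<noteq> 0\<close> by (cases m) auto
  obtain a where a: "a \<in> A" "x = p ^ n * a" using m2[of n] n unfolding rdvd_def by auto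
  have a0: "a \<noteq> 0" using a x(2) by auto
  have nd: "\<not> rdvd A p a"
  proof
    assume "rdvd A p a"
    then obtain b where b: "b \<in> A" "a = p * b" unfolding rdvd_def by auto
    have "x = p ^ m * b" using a(2) b(2) n(1) by (simp add: mult.assoc)
    thus False using m1 b(1) unfolding rdvd_def by blast
  qed
  show "\<exists>p n a. prime_el A N p \<and> n \<ge> (1::nat) \<and> a \<in> A \<and> a \<noteq> 0 \<and>
                    x = a * p ^ n \<and> \<not> rdvd A p a"
    using pp n(2) a a0 nd by (auto simp: mult.commute)
qed

end
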